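(* Let $t\in T_2$, let $\mathcal{T}_t$ be the variety defined by $t(x,y)=x$, let $X$ be a set, and let $A=X\mathcal{T}_t^{\,p}$ be the free $\mathcal{T}_t^{\,p}$-algebra over $X$ with semilattice replica congruence $\varrho$. Let $\theta$ be any congruence of $A$ and $\psi=\theta\vee\varrho$. Then $A/\theta$ is a semilattice sum of $\mathcal{T}_t$-algebras. More precisely, $\psi/\theta$ is the semilattice replica congruence of $A/\theta$, and every $\psi/\theta$-class $(a/\theta)/(\psi/\theta)$, $a\in A$, satisfies $t(x,y)=x$.
   Context: Standing conventions: $\Omega$-algebras are of a plural similarity type (no nullary operation symbols, at least one operation symbol of arity $\ge2$). $T_n$ is the set of $\Omega$-terms in $x_1,\dots,x_n$ in which all $n$ variables occur. An identity is regular if the same variables occur on both sides. $\mathcal{S}$ is the variety of $\Omega$-algebras satisfying all regular identities. A semilattice sum of $\mathcal{V}$-algebras is an $\Omega$-algebra $A$ with a congruence $\theta$ such that $A/\theta\in\mathcal{S}$ and each $\theta$-class (a subalgebra) is in $\mathcal{V}$. The semilattice replica congruence of $A$ is the smallest congruence $\varrho$ with $A/\varrho\in\mathcal{S}$. Prolongation: for an identity $\sigma$ of the form $u(y_1,\dots,y_n)=v(y_1,\dots,y_n)$ and $m\ge1$, $\sigma^p_m$ is the set of identities $u(r_1,\dots,r_n)=v(r_1,\dots,r_n)$ obtained by substituting $r_i(x_1,\dots,x_m)$ for $y_i$, with $r_i$ ranging over $T_m$; $\sigma^p=\bigcup_m\sigma^p_m$; $\Sigma^p=\bigcup_{\sigma\in\Sigma}\sigma^p$.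 For a variety $\mathcal{V}$, $\mathcal{V}^p$ is the variety defined by $\mathrm{Id}(\mathcal{V})^p$. *)

theory Defs
  imports Main
begin

datatype ('f, 'v) trm = Var 'v | Fun 'f "('f, 'v) trm list"

fun wf_trm :: "('f \<Rightarrow> nat) \<Rightarrow> ('f, 'v) trm \<Rightarrow> bool" where
  "wf_trm ar (Var x) = True"
| "wf_trm ar (Fun f ts) = (length ts = ar f \<and> (\<forall>t\<in>set ts. wf_trm ar t))"

fun vars_trm :: "('f, 'v) trm \<Rightarrow> 'v set" where
  "vars_trm (Var x) = {x}"
| "vars_trm (Fun f ts) = (\<Union>t\<in>set ts. vars_trm t)"

fun subst_trm :: "('v \<Rightarrow> ('f, 'w) trm) \<Rightarrow> ('f, 'v) trm \<Rightarrow> ('f, 'w) trm" where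
  "subst_trm \<sigma> (Var x) = \<sigma> x"
| "subst_trm \<sigma> (Fun f ts) = Fun f (map (subst_trm \<sigma>) ts)"

definition plural_type :: "('f \<Rightarrow> nat) \<Rightarrow> bool" where
  "plural_type ar \<longleftrightarrow> (\<forall>f. ar f \<ge> 1) \<and> (\<exists>f. ar f \<ge> 2)"

text \<open>Identities are pairs of terms in the variables x_1, x_2, ... (encoded as naturals).\<close>
type_synonym 'f identity = "('f, nat) trm \<times> ('f, nat) trm"

definition T :: "('f \<Rightarrow> nat) \<Rightarrow> nat \<Rightarrow> ('f, nat) trm set" where
  "T ar n = {t. wf_trm ar t \<and> vars_trm t = {1..n}}"

record ('f, 'a) alg =
  carrier :: "'a set"
  ops :: "'f \<Rightarrow> 'a list \<Rightarrow> 'a"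

definition is_alg :: "('f \<Rightarrow> nat) \<Rightarrow> ('f, 'a) alg \<Rightarrow> bool" where
  "is_alg ar A \<longleftrightarrow> (\<forall>f as. length as = ar f \<and> set as \<subseteq> carrier A \<longrightarrow> ops A f as \<in> carrier A)"

fun eval_trm :: "('f, 'a) alg \<Rightarrow> ('v \<Rightarrow> 'a) \<Rightarrow> ('f, 'v) trm \<Rightarrow> 'a" where
  "eval_trm A \<rho> (Var x) = \<rho> x"
| "eval_trm A \<rho> (Fun f ts) = ops A f (map (eval_trm A \<rho>) ts)"

definition satisfies :: "('f, 'a) alg \<Rightarrow> ('f, 'v) trm \<times> ('f, 'v) trm \<Rightarrow> bool" where
  "satisfies A e \<longleftrightarrow> (\<forall>\<rho>. (\<forall>y \<in> vars_trm (fst e) \<union> vars_trm (snd e). \<rho> y \<in> carrier A)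
        \<longrightarrow> eval_trm A \<rho> (fst e) = eval_trm A \<rho> (snd e))"

definition in_variety :: "('f \<Rightarrow> nat) \<Rightarrow> 'f identity set \<Rightarrow> ('f, 'a) alg \<Rightarrow> bool" where
  "in_variety ar \<Sigma> A \<longleftrightarrow> is_alg ar A \<and> (\<forall>e\<in>\<Sigma>. satisfies A e)"

definition regular_ids :: "('f \<Rightarrow> nat) \<Rightarrow> 'f identity set" where
  "regular_ids ar = {(u, v). wf_trm ar u \<and> wf_trm ar v \<and> vars_trm u = vars_trm v}"

definition in_S :: "('f \<Rightarrow> nat) \<Rightarrow> ('f, 'a) alg \<Rightarrow> bool" where
  "in_S ar A \<longleftrightarrow> in_variety ar (regular_ids ar) A"

definition congruence :: "('f \<Rightarrow> nat) \<Rightarrow> ('f, 'a) alg \<Rightarrow> 'a rel \<Rightarrow> bool" where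
  "congruence ar A \<theta> \<longleftrightarrow> equiv (carrier A) \<theta> \<and>
     (\<forall>f as bs. length as = ar f \<and> length bs = ar f \<and> set as \<subseteq> carrier A \<and> set bs \<subseteq> carrier A
        \<and> list_all2 (\<lambda>a b. (a, b) \<in> \<theta>) as bs \<longrightarrow> (ops A f as, ops A f bs) \<in> \<theta>)"

definition quotient_alg :: "('f, 'a) alg \<Rightarrow> 'a rel \<Rightarrow> ('f, 'a set) alg" where
  "quotient_alg A \<theta> = \<lparr> carrier = carrier A // \<theta>,
      ops = (\<lambda>f Cs. \<theta> `` {ops A f (map (\<lambda>C. SOME a. a \<in> C) Cs)}) \<rparr>"

definition cong_join :: "('f \<Rightarrow> nat) \<Rightarrow> ('f, 'a) alg \<Rightarrow> 'a rel \<Rightarrow> 'a rel \<Rightarrow> 'a rel" where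
  "cong_join ar A \<theta> \<phi> = \<Inter>{\<psi>. congruence ar A \<psi> \<and> \<theta> \<union> \<phi> \<subseteq> \<psi>}"

text \<open>For theta contained in psi, the congruence psi/theta of A/theta.\<close>
definition cong_quot :: "'a rel \<Rightarrow> 'a rel \<Rightarrow> 'a set rel" where
  "cong_quot \<theta> \<psi> = {(\<theta> `` {a}, \<theta> `` {b}) | a b. (a, b) \<in> \<psi>}"

definition sl_replica :: "('f \<Rightarrow> nat) \<Rightarrow> ('f, 'a) alg \<Rightarrow> 'a rel \<Rightarrow> bool" where
  "sl_replica ar A \<rho> \<longleftrightarrow> congruence ar A \<rho> \<and> in_S ar (quotient_alg A \<rho>) \<and>
     (\<forall>\<rho>'. congruence ar A \<rho>' \<and> in_S ar (quotient_alg A \<rho>') \<longrightarrow> \<rho> \<subseteq> \<rho>')"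

text \<open>The subalgebra on a subset (meaningful when the subset is closed under the operations).\<close>
definition restrict_alg :: "('f, 'a) alg \<Rightarrow> 'a set \<Rightarrow> ('f, 'a) alg" where
  "restrict_alg A C = \<lparr> carrier = C, ops = ops A \<rparr>"

definition closed_under_ops :: "('f \<Rightarrow> nat) \<Rightarrow> ('f, 'a) alg \<Rightarrow> 'a set \<Rightarrow> bool" where
  "closed_under_ops ar A C \<longleftrightarrow> (\<forall>f as. length as = ar f \<and> set as \<subseteq> C \<longrightarrow> ops A f as \<in> C)"

definition sl_sum :: "('f \<Rightarrow> nat) \<Rightarrow> 'f identity set \<Rightarrow> ('f, 'a) alg \<Rightarrow> bool" where
  "sl_sum ar \<Sigma> A \<longleftrightarrow> is_alg ar A \<and> (\<exists>\<theta>. congruence ar A \<theta> \<and> in_S ar (quotient_alg A \<theta>) \<and>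
     (\<forall>C \<in> carrier A // \<theta>. closed_under_ops ar A C \<and> in_variety ar \<Sigma> (restrict_alg A C)))"

inductive eq_cons :: "('f \<Rightarrow> nat) \<Rightarrow> 'f identity set \<Rightarrow> ('f, 'v) trm \<Rightarrow> ('f, 'v) trm \<Rightarrow> bool"
  for ar \<Sigma> where
  ax: "(u, v) \<in> \<Sigma> \<Longrightarrow> (\<forall>x. wf_trm ar (\<sigma> x)) \<Longrightarrow> eq_cons ar \<Sigma> (subst_trm \<sigma> u) (subst_trm \<sigma> v)"
| refl: "wf_trm ar t \<Longrightarrow> eq_cons ar \<Sigma> t t"
| sym: "eq_cons ar \<Sigma> s t \<Longrightarrow> eq_cons ar \<Sigma> t s"
| trans: "eq_cons ar \<Sigma> s t \<Longrightarrow> eq_cons ar \<Sigma> t r \<Longrightarrow> eq_cons ar \<Sigma> s r"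
| cong: "length ss = ar f \<Longrightarrow> list_all2 (eq_cons ar \<Sigma>) ss ts \<Longrightarrow> eq_cons ar \<Sigma> (Fun f ss) (Fun f ts)"

definition Id_of :: "('f \<Rightarrow> nat) \<Rightarrow> 'f identity set \<Rightarrow> 'f identity set" where
  "Id_of ar \<Sigma> = {(u, v). wf_trm ar u \<and> wf_trm ar v \<and> eq_cons ar \<Sigma> u v}"

definition prolong_m :: "('f \<Rightarrow> nat) \<Rightarrow> nat \<Rightarrow> 'f identity \<Rightarrow> 'f identity set" where
  "prolong_m ar m e = {(subst_trm r (fst e), subst_trm r (snd e)) | r.
      \<forall>y \<in> vars_trm (fst e) \<union> vars_trm (snd e). r y \<in> T ar m}"

definition prolong :: "('f \<Rightarrow> nat) \<Rightarrow> 'f identity set \<Rightarrow> 'f identity set" where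
  "prolong ar \<Sigma> = (\<Union>e\<in>\<Sigma>. \<Union>m\<in>{1..}. prolong_m ar m e)"

definition term_alg :: "('f \<Rightarrow> nat) \<Rightarrow> 'x set \<Rightarrow> ('f, ('f, 'x) trm) alg" where
  "term_alg ar X = \<lparr> carrier = {t. wf_trm ar t \<and> vars_trm t \<subseteq> X}, ops = Fun \<rparr>"

definition free_alg :: "('f \<Rightarrow> nat) \<Rightarrow> 'f identity set \<Rightarrow> 'x set \<Rightarrow> ('f, ('f, 'x) trm set) alg" where
  "free_alg ar \<Sigma> X = quotient_alg (term_alg ar X)
     {(s, t). s \<in> carrier (term_alg ar X) \<and> t \<in> carrier (term_alg ar X) \<and> eq_cons ar \<Sigma> s t}"

end

theory Submission
  imports Defs "HOL-Library.Nat_Bijection"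
begin


lemma subst_subst: "subst_trm \<tau> (subst_trm \<sigma> s) = subst_trm (\<lambda>x. subst_trm \<tau> (\<sigma> x)) s"
  by (induction s) (auto cong: map_cong)
lemma subst_cong: "(\<forall>x\<in>vars_trm s. \<sigma> x = \<sigma>' x) \<Longrightarrow> subst_trm \<sigma> s = subst_trm \<sigma>' s"
  by (induction s) (auto cong: map_cong)
lemma subst_Var: "subst_trm Var s = s"
  by (induction s) (auto simp: map_idI cong: map_cong)
lemma vars_subst: "vars_trm (subst_trm \<sigma> s) = (\<Union>x\<in>vars_trm s. vars_trm (\<sigma> x))"
  by (induction s) (auto cong: map_cong)
lemma wf_subst: "wf_trm ar s \<Longrightarrow> (\<forall>x\<in>vars_trm s. wf_trm ar (\<sigma> x)) \<Longrightarrow> wf_trm ar (subst_trm \<sigma> s)"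
  by (induction s) (auto cong: map_cong)
lemma finite_vars: "finite (vars_trm s)"
  by (induction s) (auto cong: map_cong)
lemma vars_nonempty: "plural_type ar \<Longrightarrow> wf_trm ar s \<Longrightarrow> vars_trm s \<noteq> {}"
proof (induction s)
  case (Var x) then show ?case by simp
next
  case (Fun f ts)
  then have "ts \<noteq> []" unfolding plural_type_def by (metis list.size(3) not_one_le_zero wf_trm.simps(2))
  then obtain u where "u \<in> set ts" by (cases ts) auto
  with Fun show ?case by auto
qed
lemma eval_subst: "eval_trm A h (subst_trm \<sigma> s) = eval_trm A (\<lambda>x. eval_trm A h (\<sigma> x)) s"
  by (induction s) (auto cong: map_cong)
lemma eval_cong_asg: "(\<forall>x\<in>vars_trm s. h x = h' x) \<Longrightarrow> eval_trm A h s = eval_trm A h' s"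
  by (induction s) (auto cong: map_cong)
lemma eval_term_alg: "eval_trm (term_alg ar X) h s = subst_trm h s"
  by (induction s) (auto simp: term_alg_def cong: map_cong)
lemma eval_restrict: "eval_trm (restrict_alg B C) h s = eval_trm B h s"
  by (induction s) (auto simp: restrict_alg_def cong: map_cong)


lemma cong_equiv: "congruence ar A \<theta> \<Longrightarrow> equiv (carrier A) \<theta>"
  by (simp add: congruence_def)
lemma cong_sub: "congruence ar A \<theta> \<Longrightarrow> (a,b) \<in> \<theta> \<Longrightarrow> a \<in> carrier A \<and> b \<in> carrier A"
  using cong_equiv equiv_type by blast
lemma cong_ops: "congruence ar A \<theta> \<Longrightarrow> length as = ar f \<Longrightarrow> length bs = ar f \<Longrightarrow>
   set as \<subseteq> carrier A \<Longrightarrow> set bs \<subseteq> carrier A \<Longrightarrow> list_all2 (\<lambda>a b. (a,b)\<in>\<theta>) as bs \<Longrightarrow>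
   (ops A f as, ops A f bs) \<in> \<theta>"
  unfolding congruence_def by blast
lemma cong_ops': "congruence ar A \<theta> \<Longrightarrow> length as = ar f \<Longrightarrow> list_all2 (\<lambda>a b. (a,b)\<in>\<theta>) as bs \<Longrightarrow>
   (ops A f as, ops A f bs) \<in> \<theta>"
proof -
  assume c: "congruence ar A \<theta>" and l: "length as = ar f" and r: "list_all2 (\<lambda>a b. (a,b)\<in>\<theta>) as bs"
  have "length bs = ar f" using l r list_all2_lengthD by fastforce
  moreover have "set as \<subseteq> carrier A"
  proof
    fix a assume "a \<in> set as"
    then obtain i where i: "i < length as" "a = as ! i" by (auto simp: in_set_conv_nth)
    then have "(a, bs ! i) \<in> \<theta>" using r by (simp add: list_all2_conv_all_nth)
    then show "a \<in> carrier A" using cong_sub[OF c] by blast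
  qed
  moreover have "set bs \<subseteq> carrier A"
  proof
    fix b assume "b \<in> set bs"
    then obtain i where i: "i < length bs" "b = bs ! i" by (auto simp: in_set_conv_nth)
    then have "(as ! i, b) \<in> \<theta>" using r by (simp add: list_all2_conv_all_nth)
    then show "b \<in> carrier A" using cong_sub[OF c] by blast
  qed
  ultimately show ?thesis using cong_ops[OF c l] r by blast
qed

lemma some_rep: "equiv S \<theta> \<Longrightarrow> a \<in> S \<Longrightarrow> (a, SOME b. b \<in> \<theta>``{a}) \<in> \<theta>"
  by (metis Image_singleton_iff equiv_class_self someI_ex)

lemma quot_rep: "equiv S \<theta> \<Longrightarrow> C \<in> S // \<theta> \<Longrightarrow> (SOME b. b \<in> C) \<in> C \<and> \<theta>``{SOME b. b \<in> C} = C"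
proof -
  assume e: "equiv S \<theta>" and C: "C \<in> S // \<theta>"
  then obtain a where a: "a \<in> S" "C = \<theta>``{a}" by (auto elim: quotientE)
  have ne: "a \<in> C" using a e equiv_class_self by fastforce
  have i: "(SOME b. b \<in> C) \<in> C" using someI[of "\<lambda>b. b \<in> C", OF ne] .
  then have "(a, SOME b. b \<in> C) \<in> \<theta>" using a(2) by simp
  then have "\<theta>``{SOME b. b \<in> C} = \<theta>``{a}" using e by (simp add: equiv_class_eq)
  then show ?thesis using i a(2) by simp
qed

lemma rep_in_carrier: "equiv S \<theta> \<Longrightarrow> C \<in> S // \<theta> \<Longrightarrow> (SOME b. b \<in> C) \<in> S"
  using quot_rep by (metis equiv_class_eq_iff Image_singleton_iff)

lemma eval_closed:
  assumes "is_alg ar A" "wf_trm ar s" "\<forall>x\<in>vars_trm s. h x \<in> carrier A"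
  shows "eval_trm A h s \<in> carrier A"
  using assms(2,3)
proof (induction s)
  case (Var x) thus ?case by simp
next
  case (Fun f ts)
  have "length (map (eval_trm A h) ts) = ar f" using Fun.prems by simp
  moreover have "set (map (eval_trm A h) ts) \<subseteq> carrier A" using Fun by auto
  ultimately show ?case using assms(1) unfolding is_alg_def by simp
qed

lemma eval_cong:
  assumes c: "congruence ar A \<theta>" and "wf_trm ar s" "\<forall>x\<in>vars_trm s. (h x, h' x) \<in> \<theta>"
  shows "(eval_trm A h s, eval_trm A h' s) \<in> \<theta>"
  using assms(2,3)
proof (induction s)
  case (Var x) thus ?case by simp
next
  case (Fun f ts)
  have "list_all2 (\<lambda>a b. (a,b)\<in>\<theta>) (map (eval_trm A h) ts) (map (eval_trm A h') ts)"
    using Fun by (auto simp: list_all2_map1 list_all2_map2 intro!: list.rel_refl_strong)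
  then show ?case using cong_ops'[OF c] Fun.prems by simp
qed

lemma quot_is_alg: "is_alg ar A \<Longrightarrow> congruence ar A \<theta> \<Longrightarrow> is_alg ar (quotient_alg A \<theta>)"
proof -
  assume a: "is_alg ar A" and c: "congruence ar A \<theta>"
  have e: "equiv (carrier A) \<theta>" using c cong_equiv by blast
  show ?thesis unfolding is_alg_def
  proof (intro allI impI)
    fix f Cs assume h: "length Cs = ar f \<and> set Cs \<subseteq> carrier (quotient_alg A \<theta>)"
    have "set (map (\<lambda>C. SOME b. b \<in> C) Cs) \<subseteq> carrier A"
      using h rep_in_carrier[OF e] by (auto simp: quotient_alg_def)
    then have "ops A f (map (\<lambda>C. SOME b. b \<in> C) Cs) \<in> carrier A"
      using a h unfolding is_alg_def by simp
    then show "ops (quotient_alg A \<theta>) f Cs \<in> carrier (quotient_alg A \<theta>)"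
      by (simp add: quotient_alg_def quotientI)
  qed
qed

lemma quot_ops:
  assumes c: "congruence ar A \<theta>" and "set as \<subseteq> carrier A" "length as = ar f"
  shows "ops (quotient_alg A \<theta>) f (map (\<lambda>a. \<theta>``{a}) as) = \<theta>``{ops A f as}"
proof -
  have e: "equiv (carrier A) \<theta>" using c cong_equiv by blast
  have "list_all2 (\<lambda>a b. (a,b)\<in>\<theta>) (map (\<lambda>a. SOME b. b \<in> \<theta>``{a}) as) as"
  proof (unfold list_all2_map1, rule list.rel_refl_strong)
    fix a assume "a \<in> set as"
    then have "(a, SOME b. b \<in> \<theta>``{a}) \<in> \<theta>" using assms(2) some_rep[OF e] by blast
    then show "((SOME b. b \<in> \<theta>``{a}), a) \<in> \<theta>" using e by (meson equivE symE)
  qed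
  then have "(ops A f (map (\<lambda>a. SOME b. b \<in> \<theta>``{a}) as), ops A f as) \<in> \<theta>"
    using cong_ops'[OF c] assms(3) by simp
  then show ?thesis unfolding quotient_alg_def using e by (simp add: o_def equiv_class_eq)
qed

lemma eval_quot:
  assumes c: "congruence ar A \<theta>" and a: "is_alg ar A" and "wf_trm ar s" "\<forall>x\<in>vars_trm s. h x \<in> carrier A // \<theta>"
  shows "eval_trm (quotient_alg A \<theta>) h s = \<theta>``{eval_trm A (\<lambda>x. SOME a. a \<in> h x) s}"
  using assms(3,4)
proof (induction s)
  case (Var x)
  then show ?case using quot_rep[OF cong_equiv[OF c]] by simp
next
  case (Fun f ts)
  let ?r = "\<lambda>x. SOME a. a \<in> h x"
  have e: "equiv (carrier A) \<theta>" using c cong_equiv by blast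
  have rc: "\<forall>x\<in>vars_trm u. ?r x \<in> carrier A" if "u \<in> set ts" for u
    using Fun.prems that rep_in_carrier[OF e] by auto
  have m: "map (eval_trm (quotient_alg A \<theta>) h) ts = map (\<lambda>a. \<theta>``{a}) (map (eval_trm A ?r) ts)"
    using Fun by auto
  have sub: "set (map (eval_trm A ?r) ts) \<subseteq> carrier A"
    using Fun.prems rc eval_closed[OF a] by fastforce
  have "eval_trm (quotient_alg A \<theta>) h (Fun f ts) = ops (quotient_alg A \<theta>) f (map (\<lambda>a. \<theta>``{a}) (map (eval_trm A ?r) ts))"
    by (simp only: eval_trm.simps(2) m)
  also have "... = \<theta>``{ops A f (map (eval_trm A ?r) ts)}"
    by (rule quot_ops[OF c sub]) (use Fun.prems in simp)
  finally show ?case by simp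
qed


lemma eval_quot_class:
  assumes c: "congruence ar A \<theta>" and a: "is_alg ar A" and w: "wf_trm ar s"
    and h: "\<forall>x\<in>vars_trm s. h x \<in> carrier A"
  shows "eval_trm (quotient_alg A \<theta>) (\<lambda>x. \<theta>``{h x}) s = \<theta>``{eval_trm A h s}"
proof -
  have e: "equiv (carrier A) \<theta>" using c cong_equiv by blast
  let ?r = "\<lambda>x. SOME a. a \<in> \<theta>``{h x}"
  have "eval_trm (quotient_alg A \<theta>) (\<lambda>x. \<theta>``{h x}) s = \<theta>``{eval_trm A ?r s}"
    using eval_quot[OF c a w] h by (simp add: quotientI)
  moreover have "(eval_trm A ?r s, eval_trm A h s) \<in> \<theta>"
  proof (rule eval_cong[OF c w], intro ballI)
    fix x assume "x \<in> vars_trm s"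
    then have "(h x, ?r x) \<in> \<theta>" using some_rep[OF e] h by blast
    then show "(?r x, h x) \<in> \<theta>" using e by (meson equivE symE)
  qed
  ultimately show ?thesis using e by (simp add: equiv_class_eq)
qed

lemma S_quot_iff:
  assumes a: "is_alg ar A" and c: "congruence ar A \<theta>"
  shows "in_S ar (quotient_alg A \<theta>) \<longleftrightarrow>
    (\<forall>u v (h::nat \<Rightarrow> _). (u,v) \<in> regular_ids ar \<longrightarrow> (\<forall>x\<in>vars_trm u. h x \<in> carrier A)
        \<longrightarrow> (eval_trm A h u, eval_trm A h v) \<in> \<theta>)"
proof
  have e: "equiv (carrier A) \<theta>" using c cong_equiv by blast
  assume S: "in_S ar (quotient_alg A \<theta>)"
  show "\<forall>u v (h::nat \<Rightarrow> _). (u,v) \<in> regular_ids ar \<longrightarrow> (\<forall>x\<in>vars_trm u. h x \<in> carrier A)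
        \<longrightarrow> (eval_trm A h u, eval_trm A h v) \<in> \<theta>"
  proof (intro allI impI)
    fix u v and h :: "nat \<Rightarrow> _"
    assume r: "(u,v) \<in> regular_ids ar" and h: "\<forall>x\<in>vars_trm u. h x \<in> carrier A"
    have wu: "wf_trm ar u" and wv: "wf_trm ar v" and vv: "vars_trm u = vars_trm v"
      using r by (auto simp: regular_ids_def)
    have "satisfies (quotient_alg A \<theta>) (u,v)"
      using S r unfolding in_S_def in_variety_def by blast
    moreover have "\<forall>y\<in>vars_trm u \<union> vars_trm v. \<theta>``{h y} \<in> carrier (quotient_alg A \<theta>)"
      using h vv by (auto simp: quotient_alg_def quotientI)
    ultimately have "eval_trm (quotient_alg A \<theta>) (\<lambda>x. \<theta>``{h x}) u = eval_trm (quotient_alg A \<theta>) (\<lambda>x. \<theta>``{h x}) v"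
      unfolding satisfies_def by auto
    then have "\<theta>``{eval_trm A h u} = \<theta>``{eval_trm A h v}"
      using eval_quot_class[OF c a wu] eval_quot_class[OF c a wv] h vv by simp
    moreover have "eval_trm A h u \<in> carrier A" "eval_trm A h v \<in> carrier A"
      using eval_closed[OF a] wu wv h vv by auto
    ultimately show "(eval_trm A h u, eval_trm A h v) \<in> \<theta>"
      using eq_equiv_class_iff[OF e] by blast
  qed
next
  have e: "equiv (carrier A) \<theta>" using c cong_equiv by blast
  assume R: "\<forall>u v (h::nat \<Rightarrow> _). (u,v) \<in> regular_ids ar \<longrightarrow> (\<forall>x\<in>vars_trm u. h x \<in> carrier A)
        \<longrightarrow> (eval_trm A h u, eval_trm A h v) \<in> \<theta>"
  show "in_S ar (quotient_alg A \<theta>)"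
    unfolding in_S_def in_variety_def
  proof (intro conjI ballI)
    show "is_alg ar (quotient_alg A \<theta>)" using quot_is_alg[OF a c] .
  next
    fix p assume p: "p \<in> regular_ids ar"
    then obtain u v where uv: "p = (u,v)" "wf_trm ar u" "wf_trm ar v" "vars_trm u = vars_trm v"
      by (auto simp: regular_ids_def)
    show "satisfies (quotient_alg A \<theta>) p"
      unfolding satisfies_def
    proof (intro allI impI)
      fix g :: "nat \<Rightarrow> _" assume g: "\<forall>y\<in>vars_trm (fst p) \<union> vars_trm (snd p). g y \<in> carrier (quotient_alg A \<theta>)"
      let ?r = "\<lambda>x. SOME a. a \<in> g x"
      have gq: "\<forall>x\<in>vars_trm u. g x \<in> carrier A // \<theta>" using g uv by (auto simp: quotient_alg_def)
      have rc: "\<forall>x\<in>vars_trm u. ?r x \<in> carrier A" using gq rep_in_carrier[OF e] by blast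
      have "(eval_trm A ?r u, eval_trm A ?r v) \<in> \<theta>" using R[rule_format, of u v ?r] p uv rc by simp
      then have "\<theta>``{eval_trm A ?r u} = \<theta>``{eval_trm A ?r v}" using e by (simp add: equiv_class_eq)
      then show "eval_trm (quotient_alg A \<theta>) g (fst p) = eval_trm (quotient_alg A \<theta>) g (snd p)"
        using eval_quot[OF c a uv(2)] eval_quot[OF c a uv(3)] gq uv by simp
    qed
  qed
qed

lemma cong_quot_iff:
  assumes c: "congruence ar A \<theta>" and p: "congruence ar A \<psi>" and sub: "\<theta> \<subseteq> \<psi>"
    and "a \<in> carrier A" "b \<in> carrier A"
  shows "(\<theta>``{a}, \<theta>``{b}) \<in> cong_quot \<theta> \<psi> \<longleftrightarrow> (a,b) \<in> \<psi>"
proof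
  have e: "equiv (carrier A) \<theta>" using c cong_equiv by blast
  have e2: "equiv (carrier A) \<psi>" using p cong_equiv by blast
  assume "(\<theta>``{a}, \<theta>``{b}) \<in> cong_quot \<theta> \<psi>"
  then obtain a' b' where ab: "\<theta>``{a} = \<theta>``{a'}" "\<theta>``{b} = \<theta>``{b'}" "(a',b') \<in> \<psi>"
    unfolding cong_quot_def by blast
  have "a' \<in> carrier A" "b' \<in> carrier A" using ab(3) cong_sub[OF p] by auto
  then have "(a,a') \<in> \<theta>" "(b',b) \<in> \<theta>" using ab assms(4,5) e
    by (metis eq_equiv_class_iff)+
  then show "(a,b) \<in> \<psi>" using ab(3) sub e2 by (meson equivE subsetD transE)
next
  assume "(a,b) \<in> \<psi>" then show "(\<theta>``{a}, \<theta>``{b}) \<in> cong_quot \<theta> \<psi>"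
    unfolding cong_quot_def by blast
qed


lemma cong_quot_cong:
  assumes a: "is_alg ar A" and c: "congruence ar A \<theta>" and p: "congruence ar A \<psi>" and sub: "\<theta> \<subseteq> \<psi>"
  shows "congruence ar (quotient_alg A \<theta>) (cong_quot \<theta> \<psi>)"
proof -
  have e: "equiv (carrier A) \<theta>" using c cong_equiv by blast
  have e2: "equiv (carrier A) \<psi>" using p cong_equiv by blast
  let ?Q = "cong_quot \<theta> \<psi>"
  have mem: "\<exists>a b. C = \<theta>``{a} \<and> D = \<theta>``{b} \<and> (a,b) \<in> \<psi> \<and> a \<in> carrier A \<and> b \<in> carrier A"
    if "(C,D) \<in> ?Q" for C D
    using that cong_sub[OF p] unfolding cong_quot_def by blast
  have iff: "\<And>a b. a \<in> carrier A \<Longrightarrow> b \<in> carrier A \<Longrightarrow> (\<theta>``{a}, \<theta>``{b}) \<in> ?Q \<longleftrightarrow> (a,b) \<in> \<psi>"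
    using cong_quot_iff[OF c p sub] by blast
  have eq: "equiv (carrier A // \<theta>) ?Q"
  proof (rule equivI)
    show "?Q \<subseteq> carrier A // \<theta> \<times> carrier A // \<theta>"
      using mem by (auto intro: quotientI)
    show "refl_on (carrier A // \<theta>) ?Q"
    proof (rule refl_onI)
      fix C assume "C \<in> carrier A // \<theta>"
      then obtain a where "a \<in> carrier A" "C = \<theta>``{a}" by (auto elim: quotientE)
      then show "(C,C) \<in> ?Q" using iff e2 by (meson equivE refl_onD)
    qed
    show "sym ?Q"
    proof (rule symI)
      fix C D assume "(C,D) \<in> ?Q"
      then obtain a b where "C = \<theta>``{a}" "D = \<theta>``{b}" "(a,b) \<in> \<psi>" "a \<in> carrier A" "b \<in> carrier A"
        using mem by blast
      then show "(D,C) \<in> ?Q" using iff e2 by (meson equivE symD)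
    qed
    show "trans ?Q"
    proof (rule transI)
      fix C D E assume "(C,D) \<in> ?Q" "(D,E) \<in> ?Q"
      then obtain a b b' c where "C = \<theta>``{a}" "D = \<theta>``{b}" "(a,b) \<in> \<psi>" "a \<in> carrier A" "b \<in> carrier A"
        "D = \<theta>``{b'}" "E = \<theta>``{c}" "(b',c) \<in> \<psi>" "b' \<in> carrier A" "c \<in> carrier A"
        using mem by meson
      then show "(C,E) \<in> ?Q" using iff e2 by (metis equivE transD)
    qed
  qed
  show ?thesis unfolding congruence_def
  proof (intro conjI allI impI)
    show "equiv (carrier (quotient_alg A \<theta>)) ?Q" using eq by (simp add: quotient_alg_def)
  next
    fix f Cs Ds
    assume h: "length Cs = ar f \<and> length Ds = ar f \<and> set Cs \<subseteq> carrier (quotient_alg A \<theta>) \<and>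
       set Ds \<subseteq> carrier (quotient_alg A \<theta>) \<and> list_all2 (\<lambda>a b. (a, b) \<in> ?Q) Cs Ds"
    let ?rs = "map (\<lambda>C. SOME a. a \<in> C) Cs" and ?ss = "map (\<lambda>C. SOME a. a \<in> C) Ds"
    have "list_all2 (\<lambda>a b. (a, b) \<in> \<psi>) ?rs ?ss"
      unfolding list_all2_conv_all_nth
    proof (intro conjI allI impI)
      show "length ?rs = length ?ss" using h by simp
      fix i assume "i < length ?rs"
      then have i: "i < length Cs" "i < length Ds" using h by auto
      have C: "Cs ! i \<in> carrier A // \<theta>" "Ds ! i \<in> carrier A // \<theta>"
        using h i by (auto simp: quotient_alg_def)
      have "(Cs ! i, Ds ! i) \<in> ?Q" using h i by (simp add: list_all2_conv_all_nth)
      then have "(\<theta>``{SOME a. a \<in> Cs ! i}, \<theta>``{SOME a. a \<in> Ds ! i}) \<in> ?Q"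
        using quot_rep[OF e C(1)] quot_rep[OF e C(2)] by simp
      then show "(?rs ! i, ?ss ! i) \<in> \<psi>" using iff rep_in_carrier[OF e] C i by simp
    qed
    then have "(ops A f ?rs, ops A f ?ss) \<in> \<psi>" using cong_ops'[OF p] h by simp
    then show "(ops (quotient_alg A \<theta>) f Cs, ops (quotient_alg A \<theta>) f Ds) \<in> ?Q"
      unfolding quotient_alg_def cong_quot_def by auto
  qed
qed

lemma Inter_cong:
  assumes "F \<noteq> {}" "\<forall>\<sigma>\<in>F. congruence ar A \<sigma>"
  shows "congruence ar A (\<Inter>F)"
  unfolding congruence_def
proof (intro conjI allI impI)
  obtain \<sigma> where s: "\<sigma> \<in> F" using assms(1) by blast
  show "equiv (carrier A) (\<Inter>F)"
  proof (rule equivI)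
    show "\<Inter>F \<subseteq> carrier A \<times> carrier A" using s assms(2) cong_equiv equiv_type by blast
    show "refl_on (carrier A) (\<Inter>F)" using assms(2) cong_equiv
      by (metis (no_types, lifting) Inter_iff equivE refl_on_def)
    show "sym (\<Inter>F)" using assms(2) cong_equiv by (metis (no_types, lifting) Inter_iff equivE symD symI)
    show "trans (\<Inter>F)" using assms(2) cong_equiv
      by (smt (verit, del_insts) Inter_iff equivE transD transI)
  qed
next
  fix f as bs assume h: "length as = ar f \<and> length bs = ar f \<and> set as \<subseteq> carrier A \<and> set bs \<subseteq> carrier A
    \<and> list_all2 (\<lambda>a b. (a, b) \<in> \<Inter>F) as bs"
  show "(ops A f as, ops A f bs) \<in> \<Inter>F"
  proof
    fix \<sigma> assume "\<sigma> \<in> F"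
    moreover have "list_all2 (\<lambda>a b. (a, b) \<in> \<sigma>) as bs"
      using h \<open>\<sigma> \<in> F\<close> list_all2_mono by fastforce
    ultimately show "(ops A f as, ops A f bs) \<in> \<sigma>" using assms(2) cong_ops'[of ar A \<sigma> as f bs] h by simp
  qed
qed

lemma full_cong: "is_alg ar A \<Longrightarrow> congruence ar A (carrier A \<times> carrier A)"
proof -
  assume a: "is_alg ar A"
  have "equiv (carrier A) (carrier A \<times> carrier A)"
    by (rule equivI) (auto intro!: refl_onI symI transI)
  then show ?thesis using a unfolding congruence_def is_alg_def by blast
qed

lemma cong_join_props:
  assumes a: "is_alg ar A" and c1: "congruence ar A \<theta>" and c2: "congruence ar A \<rho>"
  shows "congruence ar A (cong_join ar A \<theta> \<rho>)"
    "\<theta> \<subseteq> cong_join ar A \<theta> \<rho>" "\<rho> \<subseteq> cong_join ar A \<theta> \<rho>"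
    "congruence ar A \<sigma> \<Longrightarrow> \<theta> \<subseteq> \<sigma> \<Longrightarrow> \<rho> \<subseteq> \<sigma> \<Longrightarrow> cong_join ar A \<theta> \<rho> \<subseteq> \<sigma>"
proof -
  have "\<theta> \<union> \<rho> \<subseteq> carrier A \<times> carrier A" using c1 c2 cong_equiv equiv_type by blast
  then show "congruence ar A (cong_join ar A \<theta> \<rho>)" unfolding cong_join_def using full_cong[OF a]
    by (intro Inter_cong) auto
  show "\<theta> \<subseteq> cong_join ar A \<theta> \<rho>" "\<rho> \<subseteq> cong_join ar A \<theta> \<rho>"
    unfolding cong_join_def by auto
  show "congruence ar A \<sigma> \<Longrightarrow> \<theta> \<subseteq> \<sigma> \<Longrightarrow> \<rho> \<subseteq> \<sigma> \<Longrightarrow> cong_join ar A \<theta> \<rho> \<subseteq> \<sigma>"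
    unfolding cong_join_def by auto
qed


lemma pullback:
  assumes a: "is_alg ar A" and c: "congruence ar A \<theta>" and s: "congruence ar (quotient_alg A \<theta>) \<sigma>'"
  defines "\<sigma> \<equiv> {(x,y). x \<in> carrier A \<and> y \<in> carrier A \<and> (\<theta>``{x}, \<theta>``{y}) \<in> \<sigma>'}"
  shows "congruence ar A \<sigma>" "\<theta> \<subseteq> \<sigma>"
    "in_S ar (quotient_alg (quotient_alg A \<theta>) \<sigma>') \<Longrightarrow> in_S ar (quotient_alg A \<sigma>)"
proof -
  have e: "equiv (carrier A) \<theta>" using c cong_equiv by blast
  have e': "equiv (carrier A // \<theta>) \<sigma>'" using cong_equiv[OF s] by (simp add: quotient_alg_def)
  have cl: "x \<in> carrier A \<Longrightarrow> \<theta>``{x} \<in> carrier A // \<theta>" for x by (rule quotientI)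
  show "\<theta> \<subseteq> \<sigma>"
  proof
    fix p assume "p \<in> \<theta>"
    then obtain x y where p: "p = (x,y)" "(x,y) \<in> \<theta>" by (cases p) auto
    then have "x \<in> carrier A" "y \<in> carrier A" "\<theta>``{x} = \<theta>``{y}" using e
      by (auto simp: equiv_class_eq_iff)
    then show "p \<in> \<sigma>" using p e' cl unfolding \<sigma>_def by (metis (mono_tags, lifting) case_prodI equivE mem_Collect_eq refl_onD)
  qed
  show sc: "congruence ar A \<sigma>" unfolding congruence_def
  proof (intro conjI allI impI)
    show "equiv (carrier A) \<sigma>"
    proof (rule equivI)
      show "\<sigma> \<subseteq> carrier A \<times> carrier A" unfolding \<sigma>_def by auto
      show "refl_on (carrier A) \<sigma>" using e' cl unfolding \<sigma>_def by (auto intro!: refl_onI elim!: equivE dest: refl_onD)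
      show "sym \<sigma>" using e' unfolding \<sigma>_def by (auto intro!: symI elim!: equivE dest: symD)
      show "trans \<sigma>" using e' unfolding \<sigma>_def by (auto intro!: transI elim!: equivE dest: transD)
    qed
  next
    fix f as bs assume h: "length as = ar f \<and> length bs = ar f \<and> set as \<subseteq> carrier A \<and> set bs \<subseteq> carrier A
      \<and> list_all2 (\<lambda>a b. (a, b) \<in> \<sigma>) as bs"
    have "list_all2 (\<lambda>a b. (a, b) \<in> \<sigma>') (map (\<lambda>x. \<theta>``{x}) as) (map (\<lambda>x. \<theta>``{x}) bs)"
      using h unfolding list_all2_map1 list_all2_map2 \<sigma>_def by (auto elim: list_all2_mono)
    then have "(ops (quotient_alg A \<theta>) f (map (\<lambda>x. \<theta>``{x}) as), ops (quotient_alg A \<theta>) f (map (\<lambda>x. \<theta>``{x}) bs)) \<in> \<sigma>'"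
      using cong_ops'[OF s] h by simp
    then have "(\<theta>``{ops A f as}, \<theta>``{ops A f bs}) \<in> \<sigma>'"
      using quot_ops[OF c] h by simp
    moreover have "ops A f as \<in> carrier A" "ops A f bs \<in> carrier A" using a h unfolding is_alg_def by auto
    ultimately show "(ops A f as, ops A f bs) \<in> \<sigma>" unfolding \<sigma>_def by simp
  qed
  assume S: "in_S ar (quotient_alg (quotient_alg A \<theta>) \<sigma>')"
  have qa: "is_alg ar (quotient_alg A \<theta>)" using quot_is_alg[OF a c] .
  have R: "\<forall>u v (h::nat \<Rightarrow> _). (u,v) \<in> regular_ids ar \<longrightarrow> (\<forall>x\<in>vars_trm u. h x \<in> carrier (quotient_alg A \<theta>))
        \<longrightarrow> (eval_trm (quotient_alg A \<theta>) h u, eval_trm (quotient_alg A \<theta>) h v) \<in> \<sigma>'"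
    using S S_quot_iff[OF qa s] by blast
  show "in_S ar (quotient_alg A \<sigma>)"
    unfolding S_quot_iff[OF a sc]
  proof (intro allI impI)
    fix u v and h :: "nat \<Rightarrow> _"
    assume r: "(u,v) \<in> regular_ids ar" and h: "\<forall>x\<in>vars_trm u. h x \<in> carrier A"
    have wu: "wf_trm ar u" and wv: "wf_trm ar v" and vv: "vars_trm u = vars_trm v"
      using r by (auto simp: regular_ids_def)
    have "\<forall>x\<in>vars_trm u. \<theta>``{h x} \<in> carrier (quotient_alg A \<theta>)" using h by (simp add: quotient_alg_def quotientI)
    then have "(eval_trm (quotient_alg A \<theta>) (\<lambda>x. \<theta>``{h x}) u, eval_trm (quotient_alg A \<theta>) (\<lambda>x. \<theta>``{h x}) v) \<in> \<sigma>'"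
      using R[rule_format, of u v "\<lambda>x. \<theta>``{h x}"] r by blast
    then have "(\<theta>``{eval_trm A h u}, \<theta>``{eval_trm A h v}) \<in> \<sigma>'"
      using eval_quot_class[OF c a wu] eval_quot_class[OF c a wv] h vv by simp
    moreover have "eval_trm A h u \<in> carrier A" "eval_trm A h v \<in> carrier A"
      using eval_closed[OF a] wu wv h vv by auto
    ultimately show "(eval_trm A h u, eval_trm A h v) \<in> \<sigma>" unfolding \<sigma>_def by simp
  qed
qed

lemma replica_quot:
  assumes a: "is_alg ar A" and c: "congruence ar A \<theta>" and r: "sl_replica ar A \<rho>"
    and p: "\<psi> = cong_join ar A \<theta> \<rho>"
  shows "sl_replica ar (quotient_alg A \<theta>) (cong_quot \<theta> \<psi>)"
proof -
  have rc: "congruence ar A \<rho>" and rS: "in_S ar (quotient_alg A \<rho>)"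
    and rmin: "\<And>\<rho>'. congruence ar A \<rho>' \<Longrightarrow> in_S ar (quotient_alg A \<rho>') \<Longrightarrow> \<rho> \<subseteq> \<rho>'"
    using r unfolding sl_replica_def by auto
  have pc: "congruence ar A \<psi>" and tp: "\<theta> \<subseteq> \<psi>" and rp: "\<rho> \<subseteq> \<psi>"
    using cong_join_props[OF a c rc] p by auto
  have e: "equiv (carrier A) \<theta>" using c cong_equiv by blast
  have qa: "is_alg ar (quotient_alg A \<theta>)" using quot_is_alg[OF a c] .
  have qc: "congruence ar (quotient_alg A \<theta>) (cong_quot \<theta> \<psi>)" using cong_quot_cong[OF a c pc tp] .
  have RR: "\<forall>u v (h::nat \<Rightarrow> _). (u,v) \<in> regular_ids ar \<longrightarrow> (\<forall>x\<in>vars_trm u. h x \<in> carrier A)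
        \<longrightarrow> (eval_trm A h u, eval_trm A h v) \<in> \<rho>"
    using rS S_quot_iff[OF a rc] by blast
  have qS: "in_S ar (quotient_alg (quotient_alg A \<theta>) (cong_quot \<theta> \<psi>))"
    unfolding S_quot_iff[OF qa qc]
  proof (intro allI impI)
    fix u v and g :: "nat \<Rightarrow> _"
    assume r: "(u,v) \<in> regular_ids ar" and g: "\<forall>x\<in>vars_trm u. g x \<in> carrier (quotient_alg A \<theta>)"
    have wu: "wf_trm ar u" and wv: "wf_trm ar v" and vv: "vars_trm u = vars_trm v"
      using r by (auto simp: regular_ids_def)
    let ?r = "\<lambda>x. SOME a. a \<in> g x"
    have gq: "\<forall>x\<in>vars_trm u. g x \<in> carrier A // \<theta>" using g by (auto simp: quotient_alg_def)
    have rc': "\<forall>x\<in>vars_trm u. ?r x \<in> carrier A" using gq rep_in_carrier[OF e] by blast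
    have "(eval_trm A ?r u, eval_trm A ?r v) \<in> \<psi>" using RR[rule_format, of u v ?r] r rc' rp by blast
    then show "(eval_trm (quotient_alg A \<theta>) g u, eval_trm (quotient_alg A \<theta>) g v) \<in> cong_quot \<theta> \<psi>"
      using eval_quot[OF c a wu] eval_quot[OF c a wv] gq vv unfolding cong_quot_def by auto
  qed
  have qmin: "cong_quot \<theta> \<psi> \<subseteq> \<sigma>'" if s: "congruence ar (quotient_alg A \<theta>) \<sigma>'"
    and sS: "in_S ar (quotient_alg (quotient_alg A \<theta>) \<sigma>')" for \<sigma>'
  proof -
    let ?\<sigma> = "{(x,y). x \<in> carrier A \<and> y \<in> carrier A \<and> (\<theta>``{x}, \<theta>``{y}) \<in> \<sigma>'}"
    have "congruence ar A ?\<sigma>" "\<theta> \<subseteq> ?\<sigma>" "in_S ar (quotient_alg A ?\<sigma>)"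
      using pullback[OF a c s] sS by auto
    then have "\<rho> \<subseteq> ?\<sigma>" "\<psi> \<subseteq> ?\<sigma>" using rmin cong_join_props(4)[OF a c rc] p by auto
    then show ?thesis unfolding cong_quot_def by auto
  qed
  show ?thesis unfolding sl_replica_def using qc qS qmin by blast
qed



lemma TA_is_alg: "is_alg ar (term_alg ar X)"
  unfolding is_alg_def term_alg_def by auto

lemma E_cong:
  "congruence ar (term_alg ar X) {(s, u). s \<in> carrier (term_alg ar X) \<and> u \<in> carrier (term_alg ar X) \<and> eq_cons ar \<Sigma> s u}"
  (is "congruence ar ?T ?E")
  unfolding congruence_def
proof (intro conjI allI impI)
  show "equiv (carrier ?T) ?E"
  proof (rule equivI)
    show "?E \<subseteq> carrier ?T \<times> carrier ?T" by auto
    show "refl_on (carrier ?T) ?E" by (rule refl_onI) (auto simp: term_alg_def intro: eq_cons.refl)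
    show "sym ?E" by (rule symI) (simp add: eq_cons.sym)
    show "trans ?E" by (rule transI) (use eq_cons.trans in blast)
  qed
next
  fix f as bs assume h: "length as = ar f \<and> length bs = ar f \<and> set as \<subseteq> carrier ?T \<and> set bs \<subseteq> carrier ?T
    \<and> list_all2 (\<lambda>a b. (a, b) \<in> ?E) as bs"
  have "list_all2 (eq_cons ar \<Sigma>) as bs" using h by (auto elim: list_all2_mono)
  then have "eq_cons ar \<Sigma> (Fun f as) (Fun f bs)" using h by (auto intro: eq_cons.cong)
  moreover have "Fun f as \<in> carrier ?T" "Fun f bs \<in> carrier ?T" using h by (auto simp: term_alg_def)
  ultimately show "(ops ?T f as, ops ?T f bs) \<in> ?E" by (simp add: term_alg_def)
qed

lemma twoset: "{1..2::nat} = {1,2}" by (auto simp: numeral_2_eq_2)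
lemma vars_t: "t \<in> T ar 2 \<Longrightarrow> vars_trm t = {1,2} \<and> wf_trm ar t"
  unfolding T_def using twoset by simp

lemma prolong_inst:
  assumes pl: "plural_type ar" and tT: "t \<in> T ar 2" and wp: "wf_trm ar p" and wq: "wf_trm ar q"
    and vv: "vars_trm p = vars_trm q" and w\<tau>: "\<forall>x. wf_trm ar (\<tau> x)"
  shows "eq_cons ar (prolong ar (Id_of ar {(t, Var 1)}))
     (subst_trm \<tau> (subst_trm (\<lambda>i. if i = 1 then p else q) t)) (subst_trm \<tau> p)"
proof -
  let ?\<sigma> = "\<lambda>i::nat. if i = 1 then p else q"
  define V where "V = vars_trm p"
  define m where "m = card V"
  have fV: "finite V" unfolding V_def by (rule finite_vars)
  have neV: "V \<noteq> {}" unfolding V_def using vars_nonempty[OF pl wp] .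
  have m1: "m \<ge> 1" unfolding m_def using fV neV by (simp add: Suc_leI card_gt_0_iff)
  obtain \<beta> where bij: "bij_betw \<beta> V {1..m}"
    using finite_same_card_bij[of V "{1..m}"] fV unfolding m_def by auto
  have inj: "inj_on \<beta> V" and img: "\<beta> ` V = {1..m}" using bij by (auto simp: bij_betw_def)
  have vt: "vars_trm t = {1,2}" and wt: "wf_trm ar t" using vars_t[OF tT] by auto
  define r where "r = (\<lambda>y. subst_trm (Var \<circ> \<beta>) (?\<sigma> y))"
  have rT: "r y \<in> T ar m" for y
  proof -
    have "wf_trm ar (?\<sigma> y)" "vars_trm (?\<sigma> y) = V" using wp wq vv V_def by auto
    then show ?thesis unfolding r_def T_def using img by (auto simp: wf_subst vars_subst)
  qed
  have Id: "(t, Var 1) \<in> Id_of ar {(t, Var 1)}"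
  proof -
    have "eq_cons ar {(t, Var 1)} (subst_trm Var t) (subst_trm Var (Var (1::nat)))"
      by (rule eq_cons.ax) auto
    then show ?thesis unfolding Id_of_def using wt by (simp add: subst_Var)
  qed
  have pm: "(subst_trm r t, subst_trm r (Var 1)) \<in> prolong_m ar m (t, Var 1)"
    unfolding prolong_m_def by (rule CollectI, rule exI[of _ r]) (use rT in simp)
  have pr: "(subst_trm r t, subst_trm r (Var 1)) \<in> prolong ar (Id_of ar {(t, Var 1)})"
    unfolding prolong_def by (rule UN_I[OF Id], rule UN_I[of m]) (use m1 pm in auto)
  define \<tau>' where "\<tau>' = (\<lambda>x. \<tau> (inv_into V \<beta> x))"
  have ec: "eq_cons ar (prolong ar (Id_of ar {(t, Var 1)})) (subst_trm \<tau>' (subst_trm r t)) (subst_trm \<tau>' (subst_trm r (Var 1)))"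
    by (rule eq_cons.ax[OF pr]) (simp add: \<tau>'_def w\<tau>)
  have key: "subst_trm \<tau>' (r y) = subst_trm \<tau> (?\<sigma> y)" for y
  proof -
    have "subst_trm \<tau>' (r y) = subst_trm (\<lambda>x. \<tau>' (\<beta> x)) (?\<sigma> y)"
      unfolding r_def by (simp add: subst_subst)
    also have "... = subst_trm \<tau> (?\<sigma> y)"
      by (rule subst_cong) (use inj vv V_def in \<open>auto simp: \<tau>'_def\<close>)
    finally show ?thesis .
  qed
  have "subst_trm \<tau>' (subst_trm r t) = subst_trm \<tau> (subst_trm ?\<sigma> t)"
    by (simp add: subst_subst key)
  moreover have "subst_trm \<tau>' (subst_trm r (Var 1)) = subst_trm \<tau> p"
    using key[of 1] by simp
  ultimately show ?thesis using ec by simp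
qed

lemma A_ident:
  assumes pl: "plural_type ar" and tT: "t \<in> T ar 2"
    and A: "A = free_alg ar (prolong ar (Id_of ar {(t, Var 1)})) X"
    and wp: "wf_trm ar p" and wq: "wf_trm ar q" and vv: "vars_trm p = vars_trm q"
    and c: "\<forall>i\<in>vars_trm p. c i \<in> carrier A"
  shows "eval_trm A c (subst_trm (\<lambda>i. if i = 1 then p else q) t) = eval_trm A c p"
proof -
  let ?\<Sigma> = "prolong ar (Id_of ar {(t, Var 1)})"
  let ?T = "term_alg ar X"
  let ?E = "{(s, u). s \<in> carrier ?T \<and> u \<in> carrier ?T \<and> eq_cons ar ?\<Sigma> s u}"
  let ?\<sigma> = "\<lambda>i::nat. if i = 1 then p else q"
  have Aq: "A = quotient_alg ?T ?E" using A unfolding free_alg_def by simp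
  have Ec: "congruence ar ?T ?E" by (rule E_cong)
  have e: "equiv (carrier ?T) ?E" using cong_equiv[OF Ec] .
  have Ta: "is_alg ar ?T" by (rule TA_is_alg)
  have vt: "vars_trm t = {1,2}" and wt: "wf_trm ar t" using vars_t[OF tT] by auto
  have ws: "wf_trm ar (subst_trm ?\<sigma> t)" by (rule wf_subst[OF wt]) (use wp wq in auto)
  have vs: "vars_trm (subst_trm ?\<sigma> t) = vars_trm p" using vt vv by (simp add: vars_subst)
  have cq: "\<forall>i\<in>vars_trm p. c i \<in> carrier ?T // ?E" using c Aq by (simp add: quotient_alg_def)
  let ?\<tau>0 = "\<lambda>i. SOME x. x \<in> c i"
  have \<tau>0c: "\<forall>i\<in>vars_trm p. ?\<tau>0 i \<in> carrier ?T" using cq rep_in_carrier[OF e] by blast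
  obtain v0 where v0: "v0 \<in> vars_trm p" using vars_nonempty[OF pl wp] by blast
  define \<tau> where "\<tau> = (\<lambda>i. if i \<in> vars_trm p then ?\<tau>0 i else ?\<tau>0 v0)"
  have w\<tau>: "\<forall>x. wf_trm ar (\<tau> x)" using \<tau>0c v0 unfolding \<tau>_def by (auto simp: term_alg_def)
  have ev1: "eval_trm A c (subst_trm ?\<sigma> t) = ?E``{subst_trm ?\<tau>0 (subst_trm ?\<sigma> t)}"
    using eval_quot[OF Ec Ta ws] cq vs Aq by (simp add: eval_term_alg)
  have ev2: "eval_trm A c p = ?E``{subst_trm ?\<tau>0 p}"
    using eval_quot[OF Ec Ta wp] cq Aq by (simp add: eval_term_alg)
  have s1: "subst_trm \<tau> (subst_trm ?\<sigma> t) = subst_trm ?\<tau>0 (subst_trm ?\<sigma> t)"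
    by (rule subst_cong) (use vs in \<open>simp add: \<tau>_def\<close>)
  have s2: "subst_trm \<tau> p = subst_trm ?\<tau>0 p"
    by (rule subst_cong) (simp add: \<tau>_def)
  have ec: "eq_cons ar ?\<Sigma> (subst_trm ?\<tau>0 (subst_trm ?\<sigma> t)) (subst_trm ?\<tau>0 p)"
    using prolong_inst[OF pl tT wp wq vv w\<tau>] s1 s2 by simp
  have m1: "subst_trm ?\<tau>0 (subst_trm ?\<sigma> t) \<in> carrier ?T"
    using eval_closed[OF Ta ws] \<tau>0c vs by (simp add: eval_term_alg)
  have m2: "subst_trm ?\<tau>0 p \<in> carrier ?T"
    using eval_closed[OF Ta wp] \<tau>0c by (simp add: eval_term_alg)
  have "?E``{subst_trm ?\<tau>0 (subst_trm ?\<sigma> t)} = ?E``{subst_trm ?\<tau>0 p}"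
    using ec m1 m2 e by (intro equiv_class_eq) auto
  then show ?thesis using ev1 ev2 by simp
qed

lemma eval_rename: "eval_trm A e (subst_trm (Var \<circ> g) p) = eval_trm A (\<lambda>x. e (g x)) p"
  by (simp add: eval_subst)
lemma vars_rename: "vars_trm (subst_trm (Var \<circ> g) p) = g ` vars_trm p"
  by (auto simp add: vars_subst)
lemma wf_rename: "wf_trm ar p \<Longrightarrow> wf_trm ar (subst_trm (Var \<circ> g) p)"
  by (simp add: wf_subst)

lemma phi_props:
  fixes ar :: "'f \<Rightarrow> nat" and A :: "('f, 'a) alg" and t :: "('f, nat) trm"
  assumes a: "is_alg ar A" and c: "congruence ar A \<theta>" and vt: "vars_trm t = {1,2}" and wt: "wf_trm ar t"
    and H: "\<And>p q (d::nat \<Rightarrow> 'a). wf_trm ar p \<Longrightarrow> wf_trm ar q \<Longrightarrow> vars_trm p = vars_trm q \<Longrightarrow>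
       (\<forall>i\<in>vars_trm p. d i \<in> carrier A) \<Longrightarrow>
       eval_trm A d (subst_trm (\<lambda>i. if i = 1 then p else q) t) = eval_trm A d p"
  defines "\<phi> \<equiv> {(x,y). \<exists>(d::nat \<Rightarrow> 'a) (p::('f, nat) trm) q. wf_trm ar p \<and> wf_trm ar q \<and> vars_trm p = vars_trm q
      \<and> (\<forall>i\<in>vars_trm p. d i \<in> carrier A) \<and> (x, eval_trm A d p) \<in> \<theta> \<and> (y, eval_trm A d q) \<in> \<theta>}"
  shows "congruence ar A \<phi>" "\<theta> \<subseteq> \<phi>" "in_S ar (quotient_alg A \<phi>)"
    "(x,y) \<in> \<phi> \<Longrightarrow> h 1 = x \<Longrightarrow> h 2 = y \<Longrightarrow> (eval_trm A h t, x) \<in> \<theta>"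
proof -
  have e: "equiv (carrier A) \<theta>" using cong_equiv[OF c] .
  have ths: "\<And>x y. (x,y) \<in> \<theta> \<Longrightarrow> (y,x) \<in> \<theta>" using e by (meson equivE symD)
  have tht: "\<And>x y z. (x,y) \<in> \<theta> \<Longrightarrow> (y,z) \<in> \<theta> \<Longrightarrow> (x,z) \<in> \<theta>" using e by (meson equivE transD)
  have thr: "\<And>x. x \<in> carrier A \<Longrightarrow> (x,x) \<in> \<theta>" using e by (meson equivE refl_onD)
  define tapp where "tapp = (\<lambda>u v. eval_trm A (\<lambda>i. if i = (1::nat) then u else v) t)"
  have tapp_subst: "\<And>(d::nat \<Rightarrow> 'a) (p'::('f,nat) trm) q'. eval_trm A d (subst_trm (\<lambda>i. if i = 1 then p' else q') t) = tapp (eval_trm A d p') (eval_trm A d q')"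
  proof -
    fix d :: "nat \<Rightarrow> 'a" and p' q' :: "('f,nat) trm"
    have "(\<lambda>x. eval_trm A d (if x = (1::nat) then p' else q')) = (\<lambda>i. if i = 1 then eval_trm A d p' else eval_trm A d q')"
      by auto
    then show "eval_trm A d (subst_trm (\<lambda>i. if i = 1 then p' else q') t) = tapp (eval_trm A d p') (eval_trm A d q')"
      unfolding tapp_def by (simp add: eval_subst)
  qed
  have tapp_cong: "\<And>u u' v v'. (u,u') \<in> \<theta> \<Longrightarrow> (v,v') \<in> \<theta> \<Longrightarrow> (tapp u v, tapp u' v') \<in> \<theta>"
    unfolding tapp_def by (rule eval_cong[OF c wt]) (auto simp: vt)
  have H': "\<And>(p::('f,nat) trm) q (d::nat \<Rightarrow> 'a). wf_trm ar p \<Longrightarrow> wf_trm ar q \<Longrightarrow> vars_trm p = vars_trm q \<Longrightarrow>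
       (\<forall>i\<in>vars_trm p. d i \<in> carrier A) \<Longrightarrow> tapp (eval_trm A d p) (eval_trm A d q) = eval_trm A d p"
  proof -
    fix p q :: "('f,nat) trm" and d :: "nat \<Rightarrow> 'a" assume "wf_trm ar p" "wf_trm ar q" "vars_trm p = vars_trm q" "\<forall>i\<in>vars_trm p. d i \<in> carrier A"
    then have "eval_trm A d (subst_trm (\<lambda>i. if i = 1 then p else q) t) = eval_trm A d p" by (rule H)
    then show "tapp (eval_trm A d p) (eval_trm A d q) = eval_trm A d p" by (simp only: tapp_subst)
  qed
  have phiD: "\<And>x y. (x,y) \<in> \<phi> \<Longrightarrow> \<exists>(d::nat \<Rightarrow> 'a) (p::('f, nat) trm) q. wf_trm ar p \<and> wf_trm ar q \<and> vars_trm p = vars_trm q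
      \<and> (\<forall>i\<in>vars_trm p. d i \<in> carrier A) \<and> (x, eval_trm A d p) \<in> \<theta> \<and> (y, eval_trm A d q) \<in> \<theta>"
    unfolding \<phi>_def by blast
  have phiI: "\<And>x y (d::nat \<Rightarrow> 'a) (p::('f, nat) trm) q. wf_trm ar p \<Longrightarrow> wf_trm ar q \<Longrightarrow> vars_trm p = vars_trm q
      \<Longrightarrow> (\<forall>i\<in>vars_trm p. d i \<in> carrier A) \<Longrightarrow> (x, eval_trm A d p) \<in> \<theta> \<Longrightarrow> (y, eval_trm A d q) \<in> \<theta> \<Longrightarrow> (x,y) \<in> \<phi>"
    unfolding \<phi>_def by blast
  have refl: "(x,x) \<in> \<phi>" if "x \<in> carrier A" for x
    using phiI[of "Var 0" "Var 0" "\<lambda>_. x" x x] that thr by simp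
  show thphi: "\<theta> \<subseteq> \<phi>"
  proof
    fix pr assume "pr \<in> \<theta>"
    then obtain x y where pr: "pr = (x,y)" "(x,y) \<in> \<theta>" by (cases pr) auto
    then have "x \<in> carrier A" using cong_sub[OF c] by blast
    then show "pr \<in> \<phi>" using phiI[of "Var 0" "Var 0" "\<lambda>_. x" x y] pr thr ths by simp
  qed
  have sub: "\<phi> \<subseteq> carrier A \<times> carrier A" unfolding \<phi>_def using cong_sub[OF c] by blast
  have sym: "(y,x) \<in> \<phi>" if xy0: "(x,y) \<in> \<phi>" for x y
  proof -
    obtain d :: "nat \<Rightarrow> 'a" and p q :: "('f,nat) trm" where 1: "wf_trm ar p" "wf_trm ar q" "vars_trm p = vars_trm q"
      "\<forall>i\<in>vars_trm p. d i \<in> carrier A" "(x, eval_trm A d p) \<in> \<theta>" "(y, eval_trm A d q) \<in> \<theta>"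
      using phiD[OF xy0] by blast
    show ?thesis by (rule phiI[of q p d]) (use 1 in auto)
  qed
  have trans: "(x,z) \<in> \<phi>" if xy: "(x,y) \<in> \<phi>" and yz: "(y,z) \<in> \<phi>" for x y z
  proof -
    obtain d :: "nat \<Rightarrow> 'a" and p q :: "('f,nat) trm" where 1: "wf_trm ar p" "wf_trm ar q" "vars_trm p = vars_trm q"
      "\<forall>i\<in>vars_trm p. d i \<in> carrier A" "(x, eval_trm A d p) \<in> \<theta>" "(y, eval_trm A d q) \<in> \<theta>"
      using phiD[OF xy] by blast
    obtain d' :: "nat \<Rightarrow> 'a" and p' q' :: "('f,nat) trm" where 2: "wf_trm ar p'" "wf_trm ar q'" "vars_trm p' = vars_trm q'"
      "\<forall>i\<in>vars_trm p'. d' i \<in> carrier A" "(y, eval_trm A d' p') \<in> \<theta>" "(z, eval_trm A d' q') \<in> \<theta>"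
      using phiD[OF yz] by blast
    define E where "E = (\<lambda>k. case prod_decode k of (i,j) \<Rightarrow> if i = 0 then d j else d' j)"
    define L where "L = (\<lambda>j. prod_encode (0::nat, j))"
    define R where "R = (\<lambda>j. prod_encode (1::nat, j))"
    have EL: "(\<lambda>j. E (L j)) = d" and ER: "(\<lambda>j. E (R j)) = d'" unfolding E_def L_def R_def by auto
    have ELj: "E (L j) = d j" and ERj: "E (R j) = d' j" for j unfolding E_def L_def R_def by auto
    define P where "P = subst_trm (\<lambda>i. if i = 1 then subst_trm (Var \<circ> L) p else subst_trm (Var \<circ> R) p') t"
    define Q where "Q = subst_trm (\<lambda>i. if i = 1 then subst_trm (Var \<circ> R) q' else subst_trm (Var \<circ> L) q) t"
    have evP: "eval_trm A E P = tapp (eval_trm A d p) (eval_trm A d' p')"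
      unfolding P_def tapp_subst eval_rename EL ER ..
    have evQ: "eval_trm A E Q = tapp (eval_trm A d' q') (eval_trm A d q)"
      unfolding Q_def tapp_subst eval_rename EL ER ..
    have wP: "wf_trm ar P" unfolding P_def by (rule wf_subst[OF wt]) (use 1 2 in \<open>auto intro: wf_rename\<close>)
    have wQ: "wf_trm ar Q" unfolding Q_def by (rule wf_subst[OF wt]) (use 1 2 in \<open>auto intro: wf_rename\<close>)
    have vP: "vars_trm P = L ` vars_trm p \<union> R ` vars_trm p'"
      unfolding P_def by (auto simp add: vars_subst vt)
    have vQ: "vars_trm Q = L ` vars_trm p \<union> R ` vars_trm p'"
      unfolding Q_def using 1(3) 2(3) by (auto simp add: vars_subst vt)
    have EP: "\<forall>i\<in>vars_trm P. E i \<in> carrier A"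
      using vP 1(4) 2(4) ELj ERj by auto
    have dpc: "eval_trm A d p \<in> carrier A" using 1(5) cong_sub[OF c] by blast
    have dqc: "eval_trm A d' q' \<in> carrier A" using 2(6) cong_sub[OF c] by blast
    have "(x, eval_trm A E P) \<in> \<theta>"
    proof -
      have "eval_trm A d p = tapp (eval_trm A d p) (eval_trm A d q)" using H'[OF 1(1-4)] by simp
      moreover have "(eval_trm A d q, eval_trm A d' p') \<in> \<theta>" using 1(6) 2(5) ths tht by blast
      then have "(tapp (eval_trm A d p) (eval_trm A d q), tapp (eval_trm A d p) (eval_trm A d' p')) \<in> \<theta>"
        by (rule tapp_cong[OF thr[OF dpc]])
      ultimately have "(eval_trm A d p, eval_trm A E P) \<in> \<theta>" using evP by simp
      then show ?thesis using 1(5) tht by blast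
    qed
    moreover have "(z, eval_trm A E Q) \<in> \<theta>"
    proof -
      have "eval_trm A d' q' = tapp (eval_trm A d' q') (eval_trm A d' p')"
        using H'[OF 2(2) 2(1) 2(3)[symmetric]] 2(3) 2(4) by simp
      moreover have "(eval_trm A d' p', eval_trm A d q) \<in> \<theta>" using 1(6) 2(5) ths tht by blast
      then have "(tapp (eval_trm A d' q') (eval_trm A d' p'), tapp (eval_trm A d' q') (eval_trm A d q)) \<in> \<theta>"
        by (rule tapp_cong[OF thr[OF dqc]])
      ultimately have "(eval_trm A d' q', eval_trm A E Q) \<in> \<theta>" using evQ by simp
      then show ?thesis using 2(6) tht by blast
    qed
    ultimately show ?thesis using phiI[OF wP wQ _ EP] vP vQ by simp
  qed
  have compat: "(ops A f as, ops A f bs) \<in> \<phi>" if h: "length as = ar f" "list_all2 (\<lambda>a b. (a, b) \<in> \<phi>) as bs" for f as bs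
  proof -
    let ?n = "ar f"
    have lb: "length bs = ?n" using h list_all2_lengthD by fastforce
    have "\<forall>i. \<exists>dpq::(nat \<Rightarrow> 'a) \<times> ('f,nat) trm \<times> ('f,nat) trm. i < ?n \<longrightarrow> (wf_trm ar (fst (snd dpq)) \<and> wf_trm ar (snd (snd dpq)) \<and> vars_trm (fst (snd dpq)) = vars_trm (snd (snd dpq))
      \<and> (\<forall>k\<in>vars_trm (fst (snd dpq)). (fst dpq) k \<in> carrier A) \<and> (as ! i, eval_trm A (fst dpq) (fst (snd dpq))) \<in> \<theta>
      \<and> (bs ! i, eval_trm A (fst dpq) (snd (snd dpq))) \<in> \<theta>)"
    proof
      fix i show "\<exists>dpq::(nat \<Rightarrow> 'a) \<times> ('f,nat) trm \<times> ('f,nat) trm. i < ?n \<longrightarrow> (wf_trm ar (fst (snd dpq)) \<and> wf_trm ar (snd (snd dpq)) \<and> vars_trm (fst (snd dpq)) = vars_trm (snd (snd dpq))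
      \<and> (\<forall>k\<in>vars_trm (fst (snd dpq)). (fst dpq) k \<in> carrier A) \<and> (as ! i, eval_trm A (fst dpq) (fst (snd dpq))) \<in> \<theta>
      \<and> (bs ! i, eval_trm A (fst dpq) (snd (snd dpq))) \<in> \<theta>)"
      proof (cases "i < ?n")
        case True
        then have "(as ! i, bs ! i) \<in> \<phi>" using h by (simp add: list_all2_conv_all_nth)
        then obtain d :: "nat \<Rightarrow> 'a" and p q :: "('f,nat) trm" where dpq: "wf_trm ar p \<and> wf_trm ar q \<and> vars_trm p = vars_trm q
          \<and> (\<forall>i\<in>vars_trm p. d i \<in> carrier A) \<and> (as ! i, eval_trm A d p) \<in> \<theta> \<and> (bs ! i, eval_trm A d q) \<in> \<theta>"
          using phiD by blast
        show ?thesis apply (rule exI[of _ "(d,p,q)"]) using dpq by simp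
      qed simp
    qed
    from choice[OF this] obtain F :: "nat \<Rightarrow> (nat \<Rightarrow> 'a) \<times> ('f,nat) trm \<times> ('f,nat) trm" where F: "\<forall>i. i < ?n \<longrightarrow> wf_trm ar (fst (snd (F i))) \<and> wf_trm ar (snd (snd (F i))) \<and> vars_trm (fst (snd (F i))) = vars_trm (snd (snd (F i)))
      \<and> (\<forall>k\<in>vars_trm (fst (snd (F i))). (fst (F i)) k \<in> carrier A) \<and> (as ! i, eval_trm A (fst (F i)) (fst (snd (F i)))) \<in> \<theta>
      \<and> (bs ! i, eval_trm A (fst (F i)) (snd (snd (F i)))) \<in> \<theta>"
      ..
    define D where "D = (\<lambda>i. fst (F i))"
    define P where "P = (\<lambda>i. fst (snd (F i)))"
    define Q where "Q = (\<lambda>i. snd (snd (F i)))"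
    have F': "\<And>i. i < ?n \<Longrightarrow> wf_trm ar (P i) \<and> wf_trm ar (Q i) \<and> vars_trm (P i) = vars_trm (Q i)
      \<and> (\<forall>k\<in>vars_trm (P i). D i k \<in> carrier A) \<and> (as ! i, eval_trm A (D i) (P i)) \<in> \<theta>
      \<and> (bs ! i, eval_trm A (D i) (Q i)) \<in> \<theta>" unfolding D_def P_def Q_def using F by simp
    define E where "E = (\<lambda>k. case prod_decode k of (i,j) \<Rightarrow> D i j)"
    define g where "g = (\<lambda>i j. prod_encode (i, j))"
    have Eg: "\<And>i. (\<lambda>j. E (g i j)) = D i" unfolding E_def g_def by auto
    have Egj: "\<And>i j. E (g i j) = D i j" unfolding E_def g_def by auto
    define Pt where "Pt = Fun f (map (\<lambda>i. subst_trm (Var \<circ> g i) (P i)) [0..<?n])"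
    define Qt where "Qt = Fun f (map (\<lambda>i. subst_trm (Var \<circ> g i) (Q i)) [0..<?n])"
    have wPt: "wf_trm ar Pt" unfolding Pt_def using F' by (auto intro: wf_rename)
    have wQt: "wf_trm ar Qt" unfolding Qt_def using F' by (auto intro: wf_rename)
    have vPt: "vars_trm Pt = (\<Union>i<?n. g i ` vars_trm (P i))" unfolding Pt_def by (auto simp: vars_rename)
    have vQt: "vars_trm Qt = (\<Union>i<?n. g i ` vars_trm (P i))" unfolding Qt_def using F' by (auto simp: vars_rename)
    have EPt: "\<forall>k\<in>vars_trm Pt. E k \<in> carrier A"
    proof
      fix k assume "k \<in> vars_trm Pt"
      then obtain i j where "i < ?n" "j \<in> vars_trm (P i)" "k = g i j" using vPt by auto
      then show "E k \<in> carrier A" using F' Egj by simp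
    qed
    have evPt: "eval_trm A E Pt = ops A f (map (\<lambda>i. eval_trm A (D i) (P i)) [0..<?n])"
    proof -
      have "eval_trm A E \<circ> (\<lambda>i. subst_trm (Var \<circ> g i) (P i)) = (\<lambda>i. eval_trm A (D i) (P i))"
        by (rule ext) (simp add: eval_rename Eg)
      then show ?thesis unfolding Pt_def by simp
    qed
    have evQt: "eval_trm A E Qt = ops A f (map (\<lambda>i. eval_trm A (D i) (Q i)) [0..<?n])"
    proof -
      have "eval_trm A E \<circ> (\<lambda>i. subst_trm (Var \<circ> g i) (Q i)) = (\<lambda>i. eval_trm A (D i) (Q i))"
        by (rule ext) (simp add: eval_rename Eg)
      then show ?thesis unfolding Qt_def by simp
    qed
    have "(ops A f as, eval_trm A E Pt) \<in> \<theta>" unfolding evPt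
      by (rule cong_ops'[OF c h(1)]) (use F' h(1) in \<open>simp add: list_all2_conv_all_nth\<close>)
    moreover have "(ops A f bs, eval_trm A E Qt) \<in> \<theta>" unfolding evQt
      by (rule cong_ops'[OF c lb]) (use F' lb in \<open>simp add: list_all2_conv_all_nth\<close>)
    ultimately show ?thesis using phiI[OF wPt wQt _ EPt] vPt vQt by simp
  qed
  show cg: "congruence ar A \<phi>" unfolding congruence_def
  proof (intro conjI allI impI)
    show "equiv (carrier A) \<phi>"
    proof (rule equivI[OF sub])
      show "refl_on (carrier A) \<phi>" by (rule refl_onI) (rule refl)
      show "sym \<phi>" by (rule symI) (rule sym)
      show "trans \<phi>" by (rule transI) (rule trans)
    qed
  next
    fix f as bs assume "length as = ar f \<and> length bs = ar f \<and> set as \<subseteq> carrier A \<and> set bs \<subseteq> carrier A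
      \<and> list_all2 (\<lambda>a b. (a, b) \<in> \<phi>) as bs"
    then show "(ops A f as, ops A f bs) \<in> \<phi>" using compat by blast
  qed
  show "in_S ar (quotient_alg A \<phi>)"
    unfolding S_quot_iff[OF a cg]
  proof (intro allI impI)
    fix u v and h :: "nat \<Rightarrow> 'a"
    assume r: "(u,v) \<in> regular_ids ar" and h: "\<forall>x\<in>vars_trm u. h x \<in> carrier A"
    have wu: "wf_trm ar u" and wv: "wf_trm ar v" and vv: "vars_trm u = vars_trm v"
      using r by (auto simp: regular_ids_def)
    have "eval_trm A h u \<in> carrier A" "eval_trm A h v \<in> carrier A"
      using eval_closed[OF a] wu wv h vv by auto
    then show "(eval_trm A h u, eval_trm A h v) \<in> \<phi>"
      using phiI[OF wu wv vv h] thr by blast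
  qed
  assume xy: "(x,y) \<in> \<phi>" and h1: "h 1 = x" and h2: "h 2 = y"
  obtain d :: "nat \<Rightarrow> 'a" and p q :: "('f,nat) trm" where 1: "wf_trm ar p" "wf_trm ar q" "vars_trm p = vars_trm q"
    "\<forall>i\<in>vars_trm p. d i \<in> carrier A" "(x, eval_trm A d p) \<in> \<theta>" "(y, eval_trm A d q) \<in> \<theta>"
    using phiD[OF xy] by blast
  have "eval_trm A h t = tapp x y" unfolding tapp_def
    by (rule eval_cong_asg) (use vt h1 h2 in auto)
  moreover have "(tapp x y, tapp (eval_trm A d p) (eval_trm A d q)) \<in> \<theta>" using tapp_cong 1 by blast
  moreover have "tapp (eval_trm A d p) (eval_trm A d q) = eval_trm A d p" using H'[OF 1(1-4)] .
  ultimately have "(eval_trm A h t, eval_trm A d p) \<in> \<theta>" by simp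
  then show "(eval_trm A h t, x) \<in> \<theta>" using 1(5) ths tht by blast
qed

theorem proposition4p8:
  fixes ar :: "'f \<Rightarrow> nat" and t :: "('f, nat) trm" and X :: "'x set"
    and A :: "('f, ('f, 'x) trm set) alg"
    and \<rho> \<theta> \<psi> :: "('f, 'x) trm set rel"
  assumes "plural_type ar"
    and "t \<in> T ar 2"
    and "A = free_alg ar (prolong ar (Id_of ar {(t, Var 1)})) X"
    and "sl_replica ar A \<rho>"
    and "congruence ar A \<theta>"
    and "\<psi> = cong_join ar A \<theta> \<rho>"
  shows "sl_sum ar {(t, Var 1)} (quotient_alg A \<theta>)
    \<and> sl_replica ar (quotient_alg A \<theta>) (cong_quot \<theta> \<psi>)
    \<and> (\<forall>a \<in> carrier A.
         closed_under_ops ar (quotient_alg A \<theta>) (cong_quot \<theta> \<psi> `` {\<theta> `` {a}})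
       \<and> satisfies (restrict_alg (quotient_alg A \<theta>) (cong_quot \<theta> \<psi> `` {\<theta> `` {a}})) (t, Var 1))"
proof -
  note pl = assms(1) and tT = assms(2) and Aeq = assms(3) and rep = assms(4) and c = assms(5) and pdef = assms(6)
  let ?\<Sigma> = "prolong ar (Id_of ar {(t, Var 1)})"
  let ?T = "term_alg ar X"
  let ?E = "{(s, u). s \<in> carrier ?T \<and> u \<in> carrier ?T \<and> eq_cons ar ?\<Sigma> s u}"
  have Aq: "A = quotient_alg ?T ?E" using Aeq unfolding free_alg_def by simp
  have aA: "is_alg ar A" unfolding Aq by (rule quot_is_alg[OF TA_is_alg E_cong])
  have rc: "congruence ar A \<rho>" and rS: "in_S ar (quotient_alg A \<rho>)"
    and rmin: "\<And>\<rho>'. congruence ar A \<rho>' \<Longrightarrow> in_S ar (quotient_alg A \<rho>') \<Longrightarrow> \<rho> \<subseteq> \<rho>'"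
    using rep unfolding sl_replica_def by auto
  have vt: "vars_trm t = {1,2}" and wt: "wf_trm ar t" using vars_t[OF tT] by auto
  have H: "\<And>p q (d::nat \<Rightarrow> _). wf_trm ar p \<Longrightarrow> wf_trm ar q \<Longrightarrow> vars_trm p = vars_trm q \<Longrightarrow>
       (\<forall>i\<in>vars_trm p. d i \<in> carrier A) \<Longrightarrow>
       eval_trm A d (subst_trm (\<lambda>i. if i = 1 then p else q) t) = eval_trm A d p"
    using A_ident[OF pl tT Aeq] by blast
  define \<phi> where "\<phi> = {(x,y). \<exists>(d::nat \<Rightarrow> ('f, 'x) trm set) (p::('f, nat) trm) q. wf_trm ar p \<and> wf_trm ar q \<and> vars_trm p = vars_trm q
      \<and> (\<forall>i\<in>vars_trm p. d i \<in> carrier A) \<and> (x, eval_trm A d p) \<in> \<theta> \<and> (y, eval_trm A d q) \<in> \<theta>}"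
  have phc: "congruence ar A \<phi>" unfolding \<phi>_def by (rule phi_props(1)[OF aA c vt wt H])
  have thph: "\<theta> \<subseteq> \<phi>" unfolding \<phi>_def by (rule phi_props(2)[OF aA c vt wt H])
  have phS: "in_S ar (quotient_alg A \<phi>)" unfolding \<phi>_def by (rule phi_props(3)[OF aA c vt wt H])
  have ph4: "(eval_trm A h t, x) \<in> \<theta>" if xy: "(x,y) \<in> \<phi>" and h1: "h 1 = x" and h2: "h 2 = y" for x y h
    using phi_props(4)[OF aA c vt wt H xy[unfolded \<phi>_def] h1 h2] .
  have rph: "\<rho> \<subseteq> \<phi>" using rmin[OF phc phS] .
  have pc: "congruence ar A \<psi>" unfolding pdef by (rule cong_join_props(1)[OF aA c rc])
  have tp: "\<theta> \<subseteq> \<psi>" unfolding pdef by (rule cong_join_props(2)[OF aA c rc])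
  have rp: "\<rho> \<subseteq> \<psi>" unfolding pdef by (rule cong_join_props(3)[OF aA c rc])
  have pph: "\<psi> \<subseteq> \<phi>" unfolding pdef by (rule cong_join_props(4)[OF aA c rc phc thph rph])
  have e: "equiv (carrier A) \<theta>" using cong_equiv[OF c] .
  have e2: "equiv (carrier A) \<psi>" using cong_equiv[OF pc] .
  have ths: "\<And>x y. (x,y) \<in> \<theta> \<Longrightarrow> (y,x) \<in> \<theta>" using e by (meson equivE symD)
  have pss: "\<And>x y. (x,y) \<in> \<psi> \<Longrightarrow> (y,x) \<in> \<psi>" using e2 by (meson equivE symD)
  have pst: "\<And>x y z. (x,y) \<in> \<psi> \<Longrightarrow> (y,z) \<in> \<psi> \<Longrightarrow> (x,z) \<in> \<psi>" using e2 by (meson equivE transD)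
  have RR: "\<forall>u v (h::nat \<Rightarrow> _). (u,v) \<in> regular_ids ar \<longrightarrow> (\<forall>x\<in>vars_trm u. h x \<in> carrier A)
        \<longrightarrow> (eval_trm A h u, eval_trm A h v) \<in> \<rho>"
    using rS S_quot_iff[OF aA rc] by blast
  let ?Q = "cong_quot \<theta> \<psi>"
  have qa: "is_alg ar (quotient_alg A \<theta>)" using quot_is_alg[OF aA c] .
  have repl: "sl_replica ar (quotient_alg A \<theta>) ?Q" using replica_quot[OF aA c rep pdef] .
  have cls: "closed_under_ops ar (quotient_alg A \<theta>) (?Q `` {\<theta> `` {a}})
       \<and> satisfies (restrict_alg (quotient_alg A \<theta>) (?Q `` {\<theta> `` {a}})) (t, Var 1)"
    if aC: "a \<in> carrier A" for a
  proof -
    let ?D = "?Q `` {\<theta> `` {a}}"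
    have memD: "\<exists>b\<in>carrier A. Y = \<theta>``{b} \<and> (a,b) \<in> \<psi>" if "Y \<in> ?D" for Y
    proof -
      from that obtain a' b' where ab: "\<theta>``{a} = \<theta>``{a'}" "Y = \<theta>``{b'}" "(a',b') \<in> \<psi>"
        unfolding cong_quot_def by blast
      have b': "b' \<in> carrier A" using ab(3) cong_sub[OF pc] by blast
      have "(\<theta>``{a}, \<theta>``{b'}) \<in> ?Q" using ab unfolding cong_quot_def by blast
      then have "(a,b') \<in> \<psi>" using cong_quot_iff[OF c pc tp aC b'] by blast
      then show ?thesis using ab b' by blast
    qed
    have memI: "\<theta>``{b} \<in> ?D" if "(a,b) \<in> \<psi>" for b
      using that unfolding cong_quot_def by blast
    have repD: "(a, SOME x. x \<in> Y) \<in> \<psi> \<and> (SOME x. x \<in> Y) \<in> Y \<and> \<theta>``{SOME x. x \<in> Y} = Y \<and> Y \<in> carrier A // \<theta>"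
      if YD: "Y \<in> ?D" for Y
    proof -
      obtain b where b: "b \<in> carrier A" "Y = \<theta>``{b}" "(a,b) \<in> \<psi>" using memD[OF YD] by blast
      have Yq: "Y \<in> carrier A // \<theta>" using b by (simp add: quotientI)
      have r: "(SOME x. x \<in> Y) \<in> Y" "\<theta>``{SOME x. x \<in> Y} = Y" using quot_rep[OF e Yq] by auto
      then have "(b, SOME x. x \<in> Y) \<in> \<theta>" using b(2) by simp
      then have "(a, SOME x. x \<in> Y) \<in> \<psi>" using b(3) tp pst by blast
      then show ?thesis using r Yq by blast
    qed
    have closed: "closed_under_ops ar (quotient_alg A \<theta>) ?D"
      unfolding closed_under_ops_def
    proof (intro allI impI)
      fix f Ds assume h: "length Ds = ar f \<and> set Ds \<subseteq> ?D"
      let ?rs = "map (\<lambda>C. SOME a. a \<in> C) Ds"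
      let ?n = "ar f"
      have rsc: "set ?rs \<subseteq> carrier A"
      proof
        fix x assume "x \<in> set ?rs"
        then obtain Y where "Y \<in> set Ds" "x = (SOME a. a \<in> Y)" by auto
        then show "x \<in> carrier A" using repD h cong_sub[OF pc] by blast
      qed
      have "list_all2 (\<lambda>x y. (x,y) \<in> \<psi>) (replicate ?n a) ?rs"
        unfolding list_all2_conv_all_nth
      proof (intro conjI allI impI)
        show "length (replicate ?n a) = length ?rs" using h by simp
        fix i assume "i < length (replicate ?n a)"
        then have "i < length Ds" using h by simp
        then have "Ds ! i \<in> ?D" using h nth_mem by blast
        then have "(a, SOME x. x \<in> Ds ! i) \<in> \<psi>" using repD by blast
        then show "(replicate ?n a ! i, ?rs ! i) \<in> \<psi>" using \<open>i < length Ds\<close> h by simp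
      qed
      then have "(ops A f (replicate ?n a), ops A f ?rs) \<in> \<psi>"
        using cong_ops'[OF pc] by simp
      moreover have "(ops A f (replicate ?n a), a) \<in> \<psi>"
      proof -
        let ?u = "Fun f (replicate ?n (Var (0::nat)))"
        have n1: "?n \<ge> 1" using pl unfolding plural_type_def by blast
        have "vars_trm ?u = {0}" using n1 by (cases ?n) auto
        moreover have "wf_trm ar ?u" by simp
        ultimately have "(?u, Var 0) \<in> regular_ids ar" unfolding regular_ids_def by simp
        then have "(eval_trm A (\<lambda>_. a) ?u, eval_trm A (\<lambda>_. a) (Var 0)) \<in> \<rho>"
          using RR[rule_format, of ?u "Var 0" "\<lambda>_. a"] aC by simp
        then show ?thesis using rp by (auto simp: map_replicate_const)
      qed
      ultimately have "(a, ops A f ?rs) \<in> \<psi>" using pss pst by blast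
      then have "\<theta>``{ops A f ?rs} \<in> ?D" by (rule memI)
      then show "ops (quotient_alg A \<theta>) f Ds \<in> ?D" by (simp add: quotient_alg_def)
    qed
    have sat: "satisfies (restrict_alg (quotient_alg A \<theta>) ?D) (t, Var 1)"
      unfolding satisfies_def
    proof (intro allI impI)
      fix h :: "nat \<Rightarrow> _"
      assume hh: "\<forall>y\<in>vars_trm (fst (t, Var 1)) \<union> vars_trm (snd (t, Var (1::nat))). h y \<in> carrier (restrict_alg (quotient_alg A \<theta>) ?D)"
      then have hD: "\<forall>y\<in>{1,2}. h y \<in> ?D" using vt by (simp add: restrict_alg_def)
      let ?r = "\<lambda>x. SOME a. a \<in> h x"
      have hq: "\<forall>x\<in>vars_trm t. h x \<in> carrier A // \<theta>" using hD repD vt by simp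
      have ev: "eval_trm (quotient_alg A \<theta>) h t = \<theta>``{eval_trm A ?r t}"
        using eval_quot[OF c aA wt hq] .
      have r1: "(a, ?r 1) \<in> \<psi>" using hD repD[of "h 1"] by simp
      have r2: "(a, ?r 2) \<in> \<psi>" using hD repD[of "h 2"] by simp
      have "(?r 1, ?r 2) \<in> \<psi>" using pss[OF r1] r2 by (rule pst)
      then have "(?r 1, ?r 2) \<in> \<phi>" using pph by blast
      then have "(eval_trm A ?r t, ?r 1) \<in> \<theta>" by (rule ph4) simp_all
      then have "\<theta>``{eval_trm A ?r t} = \<theta>``{?r 1}" using e by (simp add: equiv_class_eq)
      also have "... = h 1" using repD[of "h 1"] hD by simp
      finally show "eval_trm (restrict_alg (quotient_alg A \<theta>) ?D) h (fst (t, Var 1)) =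
          eval_trm (restrict_alg (quotient_alg A \<theta>) ?D) h (snd (t, Var 1))"
        using ev by (simp add: eval_restrict)
    qed
    show ?thesis using closed sat by blast
  qed
  have slsum: "sl_sum ar {(t, Var 1)} (quotient_alg A \<theta>)"
    unfolding sl_sum_def
  proof (intro conjI exI[of _ ?Q] ballI)
    show "is_alg ar (quotient_alg A \<theta>)" using qa .
    show "congruence ar (quotient_alg A \<theta>) ?Q" "in_S ar (quotient_alg (quotient_alg A \<theta>) ?Q)"
      using repl unfolding sl_replica_def by auto
  next
    fix C assume "C \<in> carrier (quotient_alg A \<theta>) // ?Q"
    then obtain Y where Y: "Y \<in> carrier (quotient_alg A \<theta>)" "C = ?Q``{Y}" by (auto elim: quotientE)
    then obtain a where a: "a \<in> carrier A" "Y = \<theta>``{a}" by (auto simp: quotient_alg_def elim: quotientE)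
    have cl: "closed_under_ops ar (quotient_alg A \<theta>) C" and st: "satisfies (restrict_alg (quotient_alg A \<theta>) C) (t, Var 1)"
      using cls[OF a(1)] Y(2) a(2) by auto
    show "closed_under_ops ar (quotient_alg A \<theta>) C" using cl .
    have "is_alg ar (restrict_alg (quotient_alg A \<theta>) C)"
      using cl unfolding closed_under_ops_def is_alg_def restrict_alg_def by simp
    then show "in_variety ar {(t, Var 1)} (restrict_alg (quotient_alg A \<theta>) C)"
      unfolding in_variety_def using st by simp
  qed
  show ?thesis using slsum repl cls by blast
qed

end
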